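(* Let $G_i=(V_i,E_i)$ be a graph of minimum degree $\delta_i$ and maximum degree $\Delta_i$, $i\in\{1,2\}$. For integers $k_1,k_2$, let $S_i$ be a $k_i$-oaf set in $G_i$, $i\in\{1,2\}$, and let $$k'=\max\{k_1-\delta_2,\;k_2-\delta_1,\;\min\{k_2+\Delta_1,\,k_1+\Delta_2\}\}.$$ Then for every integer $k\in\{k',\dots,\Delta_1+\Delta_2\}$, the set $(S_1\times V_2)\cup(V_1\times S_2)$ is a $k$-oaf set in $G_1\times G_2$.
   Context: All graphs are finite and simple. For a graph $G=(V,E)$, a set $S\subseteq V$ and $v\in V$, let $\delta_S(v)=|\{u\in S: uv\in E\}|$, $\overline{S}=V\setminus S$, and let $\partial S$ be the set of vertices of $\overline S$ adjacent to at least one vertex of $S$. For an integer $k$, a non-empty set $S\subseteq V$ is an offensive $k$-alliance if $\delta_S(v)\ge \delta_{\overline S}(v)+k$ for every $v\in \partial S$. A set $X\subseteq V$ is an offensive $k$-alliance free set ($k$-oaf set) if no offensive $k$-alliance $S$ satisfies $S\subseteq X$. The Cartesian product $G_1\times G_2$ of $G_1=(V_1,E_1)$, $G_2=(V_2,E_2)$ has vertex set $V_1\times V_2$, with $(a,b)$ adjacent to $(c,d)$ iff either $a=c$ and $bd\in E_2$, or $b=d$ and $ac\in E_1$. *)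

theory Defs
  imports Main
begin

definition graph :: "'a set \<Rightarrow> ('a \<Rightarrow> 'a \<Rightarrow> bool) \<Rightarrow> bool" where
  "graph V E \<longleftrightarrow> finite V \<and> V \<noteq> {}
     \<and> (\<forall>u v. E u v \<longrightarrow> u \<in> V \<and> v \<in> V)
     \<and> (\<forall>u v. E u v \<longrightarrow> E v u)
     \<and> (\<forall>v. \<not> E v v)"

definition degree :: "'a set \<Rightarrow> ('a \<Rightarrow> 'a \<Rightarrow> bool) \<Rightarrow> 'a \<Rightarrow> nat" where
  "degree V E v = card {u \<in> V. E v u}"

definition min_degree :: "'a set \<Rightarrow> ('a \<Rightarrow> 'a \<Rightarrow> bool) \<Rightarrow> nat" where
  "min_degree V E = Min (degree V E ` V)"

definition max_degree :: "'a set \<Rightarrow> ('a \<Rightarrow> 'a \<Rightarrow> bool) \<Rightarrow> nat" where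
  "max_degree V E = Max (degree V E ` V)"

definition delta_in :: "('a \<Rightarrow> 'a \<Rightarrow> bool) \<Rightarrow> 'a set \<Rightarrow> 'a \<Rightarrow> nat" where
  "delta_in E S v = card {u \<in> S. E u v}"

definition boundary :: "'a set \<Rightarrow> ('a \<Rightarrow> 'a \<Rightarrow> bool) \<Rightarrow> 'a set \<Rightarrow> 'a set" where
  "boundary V E S = {v \<in> V - S. \<exists>u \<in> S. E u v}"

definition offensive_alliance :: "'a set \<Rightarrow> ('a \<Rightarrow> 'a \<Rightarrow> bool) \<Rightarrow> int \<Rightarrow> 'a set \<Rightarrow> bool" where
  "offensive_alliance V E k S \<longleftrightarrow> S \<noteq> {} \<and> S \<subseteq> V \<and>
     (\<forall>v \<in> boundary V E S. int (delta_in E S v) \<ge> int (delta_in E (V - S) v) + k)"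

definition oaf :: "'a set \<Rightarrow> ('a \<Rightarrow> 'a \<Rightarrow> bool) \<Rightarrow> int \<Rightarrow> 'a set \<Rightarrow> bool" where
  "oaf V E k X \<longleftrightarrow> X \<subseteq> V \<and> \<not> (\<exists>S. S \<subseteq> X \<and> offensive_alliance V E k S)"

definition prod_adj :: "('a \<Rightarrow> 'a \<Rightarrow> bool) \<Rightarrow> ('b \<Rightarrow> 'b \<Rightarrow> bool) \<Rightarrow> ('a \<times> 'b) \<Rightarrow> ('a \<times> 'b) \<Rightarrow> bool" where
  "prod_adj E1 E2 = (\<lambda>(a, b) (c, d). (a = c \<and> E2 b d) \<or> (b = d \<and> E1 a c))"

end

theory Submission
  imports Defs
begin

lemma delta_mono:
  assumes "finite B" "A \<subseteq> B"
  shows "delta_in E A v \<le> delta_in E B v"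
  unfolding delta_in_def using assms by (intro card_mono) auto

lemma delta_split:
  assumes "finite V" "T \<subseteq> V" "\<forall>u v. E u v \<longrightarrow> E v u"
  shows "delta_in E T a + delta_in E (V - T) a = degree V E a"
proof -
  have "{u \<in> V. E a u} = {u \<in> T. E u a} \<union> {u \<in> V - T. E u a}"
    using assms by blast
  moreover have "card ({u \<in> T. E u a} \<union> {u \<in> V - T. E u a})
      = card {u \<in> T. E u a} + card {u \<in> V - T. E u a}"
    using assms by (intro card_Un_disjoint) (auto intro: finite_subset)
  ultimately show ?thesis unfolding delta_in_def degree_def by simp
qed

lemma prod_delta:
  assumes g1: "graph V1 E1" and g2: "graph V2 E2" and T: "T \<subseteq> V1 \<times> V2"
  shows "delta_in (prod_adj E1 E2) T (a, b)
      = delta_in E2 {d. (a, d) \<in> T} b + delta_in E1 {c. (c, b) \<in> T} a"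
proof -
  have fT: "finite T" using g1 g2 T unfolding graph_def
    by (meson finite_SigmaI finite_subset)
  have irr: "\<not> E2 b b" using g2 unfolding graph_def by auto
  let ?A = "{d. (a, d) \<in> T \<and> E2 d b}"
  let ?B = "{c. (c, b) \<in> T \<and> E1 c a}"
  have fA: "finite ?A"
    by (rule finite_subset[of _ "snd ` T"]) (use fT in force)+
  have fB: "finite ?B"
    by (rule finite_subset[of _ "fst ` T"]) (use fT in force)+
  have eq: "{u \<in> T. prod_adj E1 E2 u (a, b)} = Pair a ` ?A \<union> (\<lambda>c. (c, b)) ` ?B"
    unfolding prod_adj_def by auto
  have "card (Pair a ` ?A \<union> (\<lambda>c. (c, b)) ` ?B) = card (Pair a ` ?A) + card ((\<lambda>c. (c, b)) ` ?B)"
    using fA fB irr by (intro card_Un_disjoint) auto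
  also have "\<dots> = card ?A + card ?B"
    by (subst card_image, simp add: inj_on_def)+ simp
  finally show ?thesis unfolding delta_in_def eq by simp
qed

lemma core:
  assumes g1: "graph V1 E1" and g2: "graph V2 E2"
    and o1: "oaf V1 E1 k1 S1" and o2: "oaf V2 E2 k2 S2"
    and d1: "\<forall>a\<in>V1. int (degree V1 E1 a) + k2 \<le> k"
    and d2: "\<forall>b\<in>V2. k1 \<le> k + int (degree V2 E2 b)"
    and SX: "S \<subseteq> (S1 \<times> V2) \<union> (V1 \<times> S2)"
    and al: "offensive_alliance (V1 \<times> V2) (prod_adj E1 E2) k S"
  shows False
proof -
  have S1V: "S1 \<subseteq> V1" using o1 unfolding oaf_def by auto
  have S2V: "S2 \<subseteq> V2" using o2 unfolding oaf_def by auto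
  have SV: "S \<subseteq> V1 \<times> V2" using SX S1V S2V by auto
  have Sne: "S \<noteq> {}" using al unfolding offensive_alliance_def by auto
  have fin1: "finite V1" and sym1: "\<forall>u v. E1 u v \<longrightarrow> E1 v u"
    and in1: "\<forall>u v. E1 u v \<longrightarrow> u \<in> V1 \<and> v \<in> V1"
    using g1 unfolding graph_def by auto
  have fin2: "finite V2" and sym2: "\<forall>u v. E2 u v \<longrightarrow> E2 v u"
    and in2: "\<forall>u v. E2 u v \<longrightarrow> u \<in> V2 \<and> v \<in> V2"
    using g2 unfolding graph_def by auto
  have alc: "\<And>v. v \<in> boundary (V1 \<times> V2) (prod_adj E1 E2) S \<Longrightarrow>
      int (delta_in (prod_adj E1 E2) S v) \<ge> int (delta_in (prod_adj E1 E2) (V1 \<times> V2 - S) v) + k"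
    using al unfolding offensive_alliance_def by auto
  have Dsub: "V1 \<times> V2 - S \<subseteq> V1 \<times> V2" by auto
  show False
  proof (cases "fst ` S \<subseteq> S1")
    case False
    then obtain a b0 where ab0: "(a, b0) \<in> S" "a \<notin> S1" by force
    define Sa where "Sa = {d. (a, d) \<in> S}"
    have aV: "a \<in> V1" using ab0 SV by auto
    have "Sa \<subseteq> S2" using SX ab0 unfolding Sa_def by auto
    moreover have "Sa \<noteq> {}" using ab0 unfolding Sa_def by auto
    ultimately have "\<not> offensive_alliance V2 E2 k2 Sa" using o2 unfolding oaf_def by auto
    moreover have "Sa \<subseteq> V2" using \<open>Sa \<subseteq> S2\<close> S2V by auto
    ultimately obtain b where bB: "b \<in> boundary V2 E2 Sa"
      and bl: "int (delta_in E2 Sa b) < int (delta_in E2 (V2 - Sa) b) + k2"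
      using \<open>Sa \<noteq> {}\<close> unfolding offensive_alliance_def by force
    from bB obtain u where u: "b \<in> V2" "b \<notin> Sa" "u \<in> Sa" "E2 u b"
      unfolding boundary_def by auto
    have "(a, b) \<in> boundary (V1 \<times> V2) (prod_adj E1 E2) S"
      unfolding boundary_def using u aV
      by (auto simp: Sa_def prod_adj_def intro!: bexI[of _ "(a, u)"])
    from alc[OF this] have ineq:
      "int (delta_in (prod_adj E1 E2) S (a, b)) \<ge> int (delta_in (prod_adj E1 E2) (V1 \<times> V2 - S) (a, b)) + k" .
    define T where "T = {c. (c, b) \<in> S}"
    have TV: "T \<subseteq> V1" using SV unfolding T_def by auto
    have e1: "delta_in (prod_adj E1 E2) S (a, b) = delta_in E2 Sa b + delta_in E1 T a"
      unfolding Sa_def T_def by (rule prod_delta[OF g1 g2 SV])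
    have s1: "{d. (a, d) \<in> V1 \<times> V2 - S} = V2 - Sa" using aV unfolding Sa_def by auto
    have s2: "{c. (c, b) \<in> V1 \<times> V2 - S} = V1 - T" using u unfolding T_def by auto
    have e2: "delta_in (prod_adj E1 E2) (V1 \<times> V2 - S) (a, b) = delta_in E2 (V2 - Sa) b + delta_in E1 (V1 - T) a"
      using prod_delta[OF g1 g2 Dsub, of a b] s1 s2 by simp
    have sp: "delta_in E1 T a + delta_in E1 (V1 - T) a = degree V1 E1 a"
      by (rule delta_split[OF fin1 TV sym1])
    have "int (degree V1 E1 a) + k2 \<le> k" using d1 aV by auto
    with ineq e1 e2 sp bl show False by linarith
  next
    case True
    define P where "P = fst ` S"
    have "P \<noteq> {}" using Sne unfolding P_def by auto
    hence "\<not> offensive_alliance V1 E1 k1 P" using o1 True unfolding oaf_def P_def by auto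
    moreover have PV: "P \<subseteq> V1" using True S1V unfolding P_def by auto
    ultimately obtain a where aB: "a \<in> boundary V1 E1 P"
      and al1: "int (delta_in E1 P a) < int (delta_in E1 (V1 - P) a) + k1"
      using \<open>P \<noteq> {}\<close> unfolding offensive_alliance_def by force
    from aB obtain c where c: "a \<in> V1" "a \<notin> P" "c \<in> P" "E1 c a"
      unfolding boundary_def by auto
    then obtain b where cb: "(c, b) \<in> S" unfolding P_def by force
    have bV: "b \<in> V2" using cb SV by auto
    have nS: "\<And>d. (a, d) \<notin> S" using c unfolding P_def by force
    have "(a, b) \<in> boundary (V1 \<times> V2) (prod_adj E1 E2) S"
      unfolding boundary_def using c bV nS cb
      by (auto simp: prod_adj_def intro!: bexI[of _ "(c, b)"])
    from alc[OF this] have ineq: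
      "int (delta_in (prod_adj E1 E2) S (a, b)) \<ge> int (delta_in (prod_adj E1 E2) (V1 \<times> V2 - S) (a, b)) + k" .
    define T where "T = {c. (c, b) \<in> S}"
    have TP: "T \<subseteq> P" unfolding T_def P_def by force
    have s0: "{d. (a, d) \<in> S} = {}" using nS by auto
    have e1: "delta_in (prod_adj E1 E2) S (a, b) = delta_in E1 T a"
      using prod_delta[OF g1 g2 SV, of a b] s0 unfolding T_def by (simp add: delta_in_def)
    have s1: "{d. (a, d) \<in> V1 \<times> V2 - S} = V2 - {}" using c nS by auto
    have s2: "{c. (c, b) \<in> V1 \<times> V2 - S} = V1 - T" using bV unfolding T_def by auto
    have e2: "delta_in (prod_adj E1 E2) (V1 \<times> V2 - S) (a, b) = delta_in E2 (V2 - {}) b + delta_in E1 (V1 - T) a"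
      using prod_delta[OF g1 g2 Dsub, of a b] s1 s2 by simp
    have sp: "delta_in E2 {} b + delta_in E2 (V2 - {}) b = degree V2 E2 b"
      by (rule delta_split[OF fin2 _ sym2]) simp
    have z: "delta_in E2 {} b = 0" by (simp add: delta_in_def)
    have m1: "delta_in E1 T a \<le> delta_in E1 P a" using PV fin1 TP
      by (intro delta_mono) (auto intro: finite_subset)
    have m2: "delta_in E1 (V1 - P) a \<le> delta_in E1 (V1 - T) a" using fin1 TP
      by (intro delta_mono) auto
    have "k1 \<le> k + int (degree V2 E2 b)" using d2 bV by auto
    with ineq e1 e2 sp z m1 m2 al1 show False by linarith
  qed
qed

lemma swap_alliance:
  assumes "offensive_alliance (V1 \<times> V2) (prod_adj E1 E2) k S"
  shows "offensive_alliance (V2 \<times> V1) (prod_adj E2 E1) k (prod.swap ` S)"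
proof -
  have dl: "\<And>T v. delta_in (prod_adj E2 E1) (prod.swap ` T) (prod.swap v) = delta_in (prod_adj E1 E2) T v"
  proof -
    fix T :: "('a \<times> 'b) set" and v
    have "{u \<in> prod.swap ` T. prod_adj E2 E1 u (prod.swap v)} = prod.swap ` {u \<in> T. prod_adj E1 E2 u v}"
      by (auto simp: prod_adj_def split: prod.splits)
    thus "delta_in (prod_adj E2 E1) (prod.swap ` T) (prod.swap v) = delta_in (prod_adj E1 E2) T v"
      unfolding delta_in_def by (simp add: card_image)
  qed
  have cm: "V2 \<times> V1 - prod.swap ` S = prod.swap ` (V1 \<times> V2 - S)" by auto
  show ?thesis
    unfolding offensive_alliance_def
  proof (intro conjI ballI)
    show "prod.swap ` S \<noteq> {}" "prod.swap ` S \<subseteq> V2 \<times> V1"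
      using assms unfolding offensive_alliance_def by auto
  next
    fix w assume w: "w \<in> boundary (V2 \<times> V1) (prod_adj E2 E1) (prod.swap ` S)"
    obtain x y where v0: "w = (y, x)" by (cases w) auto
    define v where "v = (x, y)"
    have v: "w = prod.swap v" unfolding v_def v0 by simp
    have "v \<in> boundary (V1 \<times> V2) (prod_adj E1 E2) S"
    proof -
      from w obtain u where "u \<in> S" "prod_adj E2 E1 (prod.swap u) w" "w \<in> V2 \<times> V1" "w \<notin> prod.swap ` S"
        unfolding boundary_def by auto
      thus ?thesis unfolding boundary_def v_def v0
        by (cases u) (auto simp: prod_adj_def image_iff intro!: bexI[of _ u])
    qed
    hence "int (delta_in (prod_adj E1 E2) S v) \<ge> int (delta_in (prod_adj E1 E2) (V1 \<times> V2 - S) v) + k"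
      using assms unfolding offensive_alliance_def by auto
    thus "int (delta_in (prod_adj E2 E1) (prod.swap ` S) w)
        \<ge> int (delta_in (prod_adj E2 E1) (V2 \<times> V1 - prod.swap ` S) w) + k"
      unfolding v cm dl .
  qed
qed

theorem theorem4:
  fixes V1 :: "'a set" and E1 :: "'a \<Rightarrow> 'a \<Rightarrow> bool"
    and V2 :: "'b set" and E2 :: "'b \<Rightarrow> 'b \<Rightarrow> bool"
    and S1 :: "'a set" and S2 :: "'b set" and k1 k2 k :: int
  assumes "graph V1 E1" and "graph V2 E2"
    and "oaf V1 E1 k1 S1" and "oaf V2 E2 k2 S2"
    and "max (k1 - int (min_degree V2 E2))
           (max (k2 - int (min_degree V1 E1))
                (min (k2 + int (max_degree V1 E1)) (k1 + int (max_degree V2 E2)))) \<le> k"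
    and "k \<le> int (max_degree V1 E1) + int (max_degree V2 E2)"
  shows "oaf (V1 \<times> V2) (prod_adj E1 E2) k ((S1 \<times> V2) \<union> (V1 \<times> S2))"
proof -
  have f1: "finite V1" and f2: "finite V2" using assms(1,2) unfolding graph_def by auto
  have Mx1: "\<forall>a\<in>V1. degree V1 E1 a \<le> max_degree V1 E1"
    unfolding max_degree_def using f1 by auto
  have Mx2: "\<forall>b\<in>V2. degree V2 E2 b \<le> max_degree V2 E2"
    unfolding max_degree_def using f2 by auto
  have Mn1: "\<forall>a\<in>V1. min_degree V1 E1 \<le> degree V1 E1 a"
    unfolding min_degree_def using f1 by auto
  have Mn2: "\<forall>b\<in>V2. min_degree V2 E2 \<le> degree V2 E2 b"
    unfolding min_degree_def using f2 by auto
  have sub: "(S1 \<times> V2) \<union> (V1 \<times> S2) \<subseteq> V1 \<times> V2"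
    using assms(3,4) unfolding oaf_def by auto
  show ?thesis
    unfolding oaf_def
  proof (intro conjI sub notI)
    assume "\<exists>S. S \<subseteq> S1 \<times> V2 \<union> V1 \<times> S2 \<and> offensive_alliance (V1 \<times> V2) (prod_adj E1 E2) k S"
    then obtain S where SX: "S \<subseteq> S1 \<times> V2 \<union> V1 \<times> S2"
      and al: "offensive_alliance (V1 \<times> V2) (prod_adj E1 E2) k S" by blast
    show False
    proof (cases "k2 + int (max_degree V1 E1) \<le> k")
      case True
      show False
      proof (rule core[OF assms(1-4) _ _ SX al])
        show "\<forall>a\<in>V1. int (degree V1 E1 a) + k2 \<le> k" using True Mx1 by force
        show "\<forall>b\<in>V2. k1 \<le> k + int (degree V2 E2 b)" using assms(5) Mn2 by force
      qed
    next
      case False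
      hence kk: "k1 + int (max_degree V2 E2) \<le> k" using assms(5) by linarith
      have SX': "prod.swap ` S \<subseteq> S2 \<times> V1 \<union> V2 \<times> S1" using SX by auto
      show False
      proof (rule core[OF assms(2,1,4,3) _ _ SX' swap_alliance[OF al]])
        show "\<forall>a\<in>V2. int (degree V2 E2 a) + k1 \<le> k" using kk Mx2 by force
        show "\<forall>b\<in>V1. k2 \<le> k + int (degree V1 E1 b)" using assms(5) Mn1 by force
      qed
    qed
  qed
qed

end
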